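(* For any $\epsilon>0$ consider, for $r\geqslant 0$, \[ \begin{aligned} \overline u_{\rm in,\epsilon}(r) &=L(r^2+\epsilon)^{-\frac{m}{2}}, \\ \overline v_{\rm in,\epsilon}(r) &=m(n-2-m) L(r^2+\epsilon)^{-\frac{m+2}{2}}, \\ \overline w_{\rm in,\epsilon}(r) &=m(m+2)(n-2-m)(n-4-m) L(r^2+\epsilon)^{-\frac{m+4}{2}}. \end{aligned} \] Then for all $r>0$, \[ -\Delta \overline u_{\rm in,\epsilon} \geqslant \overline v_{\rm in,\epsilon},\qquad -\Delta \overline v_{\rm in,\epsilon} \geqslant \overline w_{\rm in,\epsilon},\qquad -\Delta \overline w_{\rm in,\epsilon} \geqslant \overline u_{\rm in,\epsilon}^p . \]
   Context: Let $n\geqslant 15$ and $p>p_{\mathsf{JL}}(6,n)$, where $p_{\mathsf{JL}}(6,n)=\frac{(n+4)\sqrt{3} - \sqrt{\sqrt[3]{K_0+K_1}+ \sqrt[3]{K_0-K_1} + 3n^2+32 }}{(n-8)\sqrt{3} - \sqrt{\sqrt[3]{K_0+K_1} + \sqrt[3]{K_0-K_1} + 3n^2+32 }}$ with $2K_0 =-27n^6+324 n^5-756n^4-2592 n^3 + 25776 n^2 +5184 n -23744$, $2K_1 = \sqrt{(2K_0)^2 - 4(192n^2+256)^3}$. Let $m=6/(p-1)$ and $L=\big(m(m+2)(m+4)(n-2-m)(n-4-m)(n-6-m)\big)^{1/(p-1)}$. For a function $f$ of $r=|x|$, $\Delta f$ denotes the Laplacian in $\mathbf R^n$ of $x\mapsto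 f(|x|)$, i.e. $f''+\frac{n-1}{r}f'$. *)

theory Defs
  imports "HOL-Analysis.Analysis"
begin

definition K0 :: "nat \<Rightarrow> real" where
  "K0 n = (-27*real n^6 + 324*real n^5 - 756*real n^4 - 2592*real n^3
           + 25776*real n^2 + 5184*real n - 23744) / 2"

definition K1 :: "nat \<Rightarrow> real" where
  "K1 n = sqrt ((2 * K0 n)^2 - 4 * (192 * real n^2 + 256)^3) / 2"

definition pJL6 :: "nat \<Rightarrow> real" where
  "pJL6 n = (let S = sqrt (root 3 (K0 n + K1 n) + root 3 (K0 n - K1 n) + 3 * real n^2 + 32)
             in ((real n + 4) * sqrt 3 - S) / ((real n - 8) * sqrt 3 - S))"

definition mexp :: "real \<Rightarrow> real" where
  "mexp p = 6 / (p - 1)"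

definition Lconst :: "nat \<Rightarrow> real \<Rightarrow> real" where
  "Lconst n p = (let m = mexp p in
     (m * (m + 2) * (m + 4) * (real n - 2 - m) * (real n - 4 - m) * (real n - 6 - m)) powr (1 / (p - 1)))"

definition rlap :: "nat \<Rightarrow> (real \<Rightarrow> real) \<Rightarrow> real \<Rightarrow> real" where
  "rlap n f r = deriv (deriv f) r + (real n - 1) / r * deriv f r"

definition u_in :: "nat \<Rightarrow> real \<Rightarrow> real \<Rightarrow> real \<Rightarrow> real" where
  "u_in n p \<epsilon> r = Lconst n p * (r^2 + \<epsilon>) powr (- mexp p / 2)"

definition v_in :: "nat \<Rightarrow> real \<Rightarrow> real \<Rightarrow> real \<Rightarrow> real" where
  "v_in n p \<epsilon> r = mexp p * (real n - 2 - mexp p) * Lconst n p * (r^2 + \<epsilon>) powr (- (mexp p + 2) / 2)"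

definition w_in :: "nat \<Rightarrow> real \<Rightarrow> real \<Rightarrow> real \<Rightarrow> real" where
  "w_in n p \<epsilon> r = mexp p * (mexp p + 2) * (real n - 2 - mexp p) * (real n - 4 - mexp p)
      * Lconst n p * (r^2 + \<epsilon>) powr (- (mexp p + 4) / 2)"

end

theory Submission imports Defs begin

lemma d1:
  fixes C a e :: real assumes e: "e > 0"
  shows "((\<lambda>x. C * (x^2+e) powr a) has_real_derivative C*(a*(x^2+e) powr (a-1)*(2*x))) (at x)"
proof -
  have p: "x^2 + e > 0" using e by (simp add: add_nonneg_pos)
  have "((\<lambda>x. x^2+e) has_real_derivative 2*x) (at x)"
    by (auto intro!: derivative_eq_intros)
  from DERIV_fun_powr[OF this p, of a] have "((\<lambda>x. (x^2+e) powr a) has_real_derivative a*(x^2+e) powr (a-1)*(2*x)) (at x)" by simp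
  then show ?thesis by (rule DERIV_cmult)
qed

lemma deriv1:
  fixes C a e :: real assumes e: "e > 0"
  shows "deriv (\<lambda>x. C * (x^2+e) powr a) = (\<lambda>x. C*(a*(x^2+e) powr (a-1)*(2*x)))"
  using d1[OF e] by (intro ext DERIV_imp_deriv) 

lemma d2:
  fixes C a e :: real assumes e: "e > 0"
  shows "((\<lambda>x. C*(a*(x^2+e) powr (a-1)*(2*x))) has_real_derivative
      C*a*2*((x^2+e) powr (a-1) + x * ((a-1)*(x^2+e) powr (a-2)*(2*x)))) (at x)"
proof -
  have "((\<lambda>x. (x^2+e) powr (a-1)) has_real_derivative (a-1)*(x^2+e) powr (a-1-1)*(2*x)) (at x)"
    using d1[OF e, of 1 "a-1" x] by simp
  then have h: "((\<lambda>x. (x^2+e) powr (a-1)) has_real_derivative (a-1)*(x^2+e) powr (a-2)*(2*x)) (at x)"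
    by (simp add: algebra_simps)
  have "((\<lambda>x. x * (x^2+e) powr (a-1)) has_real_derivative
      1 * (x^2+e) powr (a-1) + x * ((a-1)*(x^2+e) powr (a-2)*(2*x))) (at x)"
    using DERIV_mult[OF DERIV_ident h] by (simp add: algebra_simps)
  from DERIV_cmult[OF this, of "C*a*2"] show ?thesis
    by (simp add: algebra_simps)
qed

lemma rlap_pow:
  fixes C a e r :: real assumes e: "e > 0"
  shows "rlap n (\<lambda>x. C * (x^2+e) powr a) r =
     C*a*2*((r^2+e) powr (a-1) + r * ((a-1)*(r^2+e) powr (a-2)*(2*r)))
     + (real n - 1) / r * (C*(a*(r^2+e) powr (a-1)*(2*r)))"
  unfolding rlap_def deriv1[OF e] using DERIV_imp_deriv[OF d2[OF e]] by simp

lemma rlap_ineq: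
  fixes C k e r :: real assumes e: "e > 0" and r: "r > 0" and Ck: "C*k \<ge> 0" and k: "k \<ge> 0"
  shows "- rlap n (\<lambda>x. C * (x^2+e) powr (-k/2)) r \<ge> C*k*(real n - k - 2)*(r^2+e) powr (-(k+2)/2)"
proof -
  define s where "s = r^2+e"
  have s: "s > 0" using e s_def by (simp add: add_nonneg_pos)
  define q where "q = s powr (-k/2 - 2)"
  have q: "q > 0" using s q_def by simp
  have q1: "s powr (-k/2 - 1) = q * s" unfolding q_def
  proof -
    have "s powr (-k/2-1) = s powr ((-k/2-2)+1)" by (rule arg_cong[where f="\<lambda>t. s powr t"]) simp
    also have "\<dots> = s powr (-k/2-2) * s powr 1" by (rule powr_add)
    finally show "s powr (-k/2 - 1) = s powr (-k/2-2) * s" using s by simp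
  qed
  have q2: "s powr (-(k+2)/2) = q * s" using q1 by (simp add: field_simps)
  have L: "rlap n (\<lambda>x. C * (x^2+e) powr (-k/2)) r = 
     C*(-k/2)*2*(q * s + r * ((-k/2-1)*q*(2*r)))
     + (real n - 1) / r * (C*((-k/2)*(q * s)*(2*r)))"
    unfolding rlap_pow[OF e] s_def[symmetric] q1 q_def[symmetric]
    by (simp add: algebra_simps)
  have "-rlap n (\<lambda>x. C * (x^2+e) powr (-k/2)) r - C*k*(real n - k - 2)*(r^2+e) powr (-(k+2)/2)
      = C*k*q*((real n) * s - (k+2)*r^2 - (real n - k - 2) * s)"
    unfolding L s_def[symmetric] q2 using r by (simp add: field_simps power2_eq_square)
  also have "\<dots> = (C*k)*q*((k+2)*e)" by (simp add: s_def algebra_simps)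
  also have "\<dots> \<ge> 0" using Ck q k e by simp
  finally show ?thesis by simp
qed
lemma polyA:
  fixes x :: real assumes x: "x \<ge> 15"
  shows "0 < ((-27*x^6 + 324*x^5 - 756*x^4 - 2592*x^3 + 25776*x^2 + 5184*x - 23744) / 2)^2 - (192*x^2+256)^3"
proof -
  define t where "t = x - 15"
  have t: "t \<ge> 0" using x t_def by simp
  have xt: "x = t + 15" using t_def by simp
  have tp: "0 \<le> t^k" for k :: nat using t by simp
  have pos: "0 < 10214160759983817 + 10585461850409628*t + 4894534148604354*t^2 + 1347076448060364*t^3 + 246965545626615*t^4 + 31863611628216*t^5 + 2971699904988*t^6 + 202081266936*t^7 + 9951685191*t^8 + 346289580*t^9 + 8084610*t^10 + 113724*t^11 + 729*t^12"
    using t tp[of 2] tp[of 3] tp[of 4] tp[of 5] tp[of 6] tp[of 7] tp[of 8] tp[of 9] tp[of 10] tp[of 11] tp[of 12] by linarith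
  have eq: "4*(((-27*x^6 + 324*x^5 - 756*x^4 - 2592*x^3 + 25776*x^2 + 5184*x - 23744) / 2)^2 - (192*x^2+256)^3) = 10214160759983817 + 10585461850409628*t + 4894534148604354*t^2 + 1347076448060364*t^3 + 246965545626615*t^4 + 31863611628216*t^5 + 2971699904988*t^6 + 202081266936*t^7 + 9951685191*t^8 + 346289580*t^9 + 8084610*t^10 + 113724*t^11 + 729*t^12"
    unfolding xt by algebra
  have "0 < 4*(((-27*x^6 + 324*x^5 - 756*x^4 - 2592*x^3 + 25776*x^2 + 5184*x - 23744) / 2)^2 - (192*x^2+256)^3)" by (subst eq) (rule pos)
  then show ?thesis by simp
qed

lemma polyB:
  fixes x :: real assumes x: "x \<ge> 15"
  shows "0 < (160-48*x)^3 - 3*(192*x^2+256)*(160-48*x) - 2*((-27*x^6 + 324*x^5 - 756*x^4 - 2592*x^3 + 25776*x^2 + 5184*x - 23744) / 2)"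
proof -
  define t where "t = x - 15"
  have t: "t \<ge> 0" using x t_def by simp
  have xt: "x = t + 15" using t_def by simp
  have tp: "0 \<le> t^k" for k :: nat using t by simp
  have pos: "0 < 265356 + 91837800*t + 31843476*t^2 + 4234032*t^3 + 270324*t^4 + 8424*t^5 + 108*t^6"
    using t tp[of 2] tp[of 3] tp[of 4] tp[of 5] tp[of 6] by linarith
  have eq: "4*((160-48*x)^3 - 3*(192*x^2+256)*(160-48*x) - 2*((-27*x^6 + 324*x^5 - 756*x^4 - 2592*x^3 + 25776*x^2 + 5184*x - 23744) / 2)) = 265356 + 91837800*t + 31843476*t^2 + 4234032*t^3 + 270324*t^4 + 8424*t^5 + 108*t^6"
    unfolding xt by algebra
  have "0 < 4*((160-48*x)^3 - 3*(192*x^2+256)*(160-48*x) - 2*((-27*x^6 + 324*x^5 - 756*x^4 - 2592*x^3 + 25776*x^2 + 5184*x - 23744) / 2))" by (subst eq) (rule pos)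
  then show ?thesis by simp
qed

lemma polyC:
  fixes x :: real assumes x: "x \<ge> 15"
  shows "0 < -((-3*x^2-32)^3 - 3*(192*x^2+256)*(-3*x^2-32) - 2*((-27*x^6 + 324*x^5 - 756*x^4 - 2592*x^3 + 25776*x^2 + 5184*x - 23744) / 2))"
proof -
  define t where "t = x - 15"
  have t: "t \<ge> 0" using x t_def by simp
  have xt: "x = t + 15" using t_def by simp
  have tp: "0 \<le> t^k" for k :: nat using t by simp
  have pos: "0 < 634187232 + 235303056*t + 34582464*t^2 + 2516832*t^3 + 90720*t^4 + 1296*t^5"
    using t tp[of 2] tp[of 3] tp[of 4] tp[of 5] tp[of 6] by linarith
  have eq: "4*(-((-3*x^2-32)^3 - 3*(192*x^2+256)*(-3*x^2-32) - 2*((-27*x^6 + 324*x^5 - 756*x^4 - 2592*x^3 + 25776*x^2 + 5184*x - 23744) / 2))) = 634187232 + 235303056*t + 34582464*t^2 + 2516832*t^3 + 90720*t^4 + 1296*t^5"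
    unfolding xt by algebra
  have "0 < 4*(-((-3*x^2-32)^3 - 3*(192*x^2+256)*(-3*x^2-32) - 2*((-27*x^6 + 324*x^5 - 756*x^4 - 2592*x^3 + 25776*x^2 + 5184*x - 23744) / 2)))" by (subst eq) (rule pos)
  then show ?thesis by simp
qed


lemma cubic_root_bound:
  fixes x :: real assumes x: "x \<ge> 15"
  defines "k0 \<equiv> (-27*x^6 + 324*x^5 - 756*x^4 - 2592*x^3 + 25776*x^2 + 5184*x - 23744) / 2"
  defines "PP \<equiv> 192*x^2+256"
  defines "k1 \<equiv> sqrt ((2 * k0)^2 - 4 * PP^3) / 2"
  defines "A \<equiv> root 3 (k0 + k1) + root 3 (k0 - k1)"
  shows "-3*x^2-32 < A \<and> A < 160 - 48*x"
proof -
  have D: "0 < k0^2 - PP^3" using polyA[OF x] unfolding k0_def PP_def .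
  have k1: "k1 = sqrt (k0^2 - PP^3)"
  proof -
    have e: "(2 * k0)^2 - 4 * PP^3 = 4 * (k0^2 - PP^3)" by (simp add: power2_eq_square)
    show ?thesis unfolding k1_def e real_sqrt_mult by simp
  qed
  have k1pos: "k1 > 0" using D k1 by simp
  have k1sq: "k1^2 = k0^2 - PP^3" using D k1 by simp
  have PP: "PP > 0" unfolding PP_def by (simp add: add_nonneg_pos)
  define a where "a = root 3 (k0 + k1)"
  define b where "b = root 3 (k0 - k1)"
  have a3: "a^3 = k0 + k1" unfolding a_def by (simp add: odd_real_root_pow)
  have b3: "b^3 = k0 - k1" unfolding b_def by (simp add: odd_real_root_pow)
  have ab: "a*b = PP"
  proof -
    have "(k0+k1)*(k0-k1) = PP^3" using k1sq by (simp add: algebra_simps power2_eq_square)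
    then have "a*b = root 3 (PP^3)" unfolding a_def b_def by (simp add: real_root_mult[symmetric])
    also have "\<dots> = PP" using PP by (simp add: real_root_power_cancel)
    finally show ?thesis .
  qed
  have aneb: "a \<noteq> b" using a3 b3 k1pos by auto
  have Aab: "A = a + b" unfolding A_def a_def b_def ..
  have cub: "A^3 - 3*PP*A - 2*k0 = 0"
  proof -
    have "A^3 = a^3 + b^3 + 3*(a*b)*(a+b)" unfolding Aab by algebra
    then show ?thesis using a3 b3 ab Aab by simp
  qed
  have A2: "A^2 > 4*PP"
  proof -
    have "A^2 - 4*PP = (a-b)^2" unfolding Aab ab[symmetric] by algebra
    moreover have "(a-b)^2 > 0" using aneb by simp
    ultimately show ?thesis by linarith
  qed
  have fact: "t^3 - 3*PP*t - 2*k0 = (t - A) * (t^2 + t*A + A^2 - 3*PP)" for t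
    using cub by algebra
  have quad: "t^2 + t*A + A^2 - 3*PP > 0" for t
  proof -
    have e: "t^2 + t*A + A^2 - 3*PP = ((2*t+A)^2 + 3*(A^2 - 4*PP))/4" by algebra
    have "(2*t+A)^2 + 3*(A^2 - 4*PP) > 0" using A2 by (intro add_nonneg_pos) auto
    then show ?thesis unfolding e by simp
  qed
  have fB: "0 < (160-48*x)^3 - 3*PP*(160-48*x) - 2*k0" using polyB[OF x] unfolding k0_def PP_def .
  have fC: "0 < -((-3*x^2-32)^3 - 3*PP*(-3*x^2-32) - 2*k0)" using polyC[OF x] unfolding k0_def PP_def .
  have "0 < (160-48*x - A) * ((160-48*x)^2 + (160-48*x)*A + A^2 - 3*PP)" using fB fact by simp
  then have 1: "A < 160 - 48*x" using quad[of "160-48*x"] by (simp add: zero_less_mult_iff)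
  have "(-3*x^2-32 - A) * ((-3*x^2-32)^2 + (-3*x^2-32)*A + A^2 - 3*PP) < 0" using fC fact[of "-3*x^2-32"] by simp
  then have 2: "-3*x^2-32 < A" using quad[of "-3*x^2-32"] by (simp add: mult_less_0_iff)
  show ?thesis using 1 2 by simp
qed

lemma pJL6_bound:
  assumes n: "n \<ge> 15" and p: "p > pJL6 n"
  shows "p > 1 \<and> 6/(p-1) < real n - 6"
proof -
  define x where "x = real n"
  have x: "x \<ge> 15" using n x_def by simp
  define A where "A = root 3 (K0 n + K1 n) + root 3 (K0 n - K1 n)"
  have AB: "-3*x^2-32 < A \<and> A < 160 - 48*x"
    using cubic_root_bound[OF x] unfolding A_def K1_def K0_def x_def by simp
  define S where "S = sqrt (A + 3*x^2 + 32)"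
  have S0: "S > 0" unfolding S_def using AB by simp
  have "A + 3*x^2 + 32 < 3*(x-8)^2" using AB by (simp add: power2_eq_square algebra_simps)
  then have "S < sqrt (3*(x-8)^2)" unfolding S_def by simp
  also have "\<dots> = sqrt 3 * (x - 8)" using x by (simp add: real_sqrt_mult)
  finally have S1: "S < sqrt 3 * (x-8)" .
  have pj: "pJL6 n = ((x + 4) * sqrt 3 - S) / ((x - 8) * sqrt 3 - S)"
    unfolding pJL6_def S_def A_def x_def Let_def by simp
  define d where "d = (x - 8) * sqrt 3 - S"
  have d0: "d > 0" using S1 d_def by (simp add: algebra_simps)
  have xs: "x * sqrt 3 \<ge> 15 * sqrt 3" using x by (intro mult_right_mono) auto
  have dd: "d = x * sqrt 3 - 8 * sqrt 3 - S" by (simp add: d_def algebra_simps)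
  have ee: "2*(x-6)* sqrt 3 = 2*(x * sqrt 3) - 12 * sqrt 3" by (simp add: algebra_simps)
  have d1: "d < 2*(x-6)* sqrt 3" unfolding ee dd using S0 xs real_sqrt_ge_zero[of 3] by linarith
  have s3: "sqrt 3 > 0" by simp
  have pj2: "pJL6 n = 1 + 12* sqrt 3/d" unfolding pj d_def[symmetric] using d0
    by (simp add: field_simps d_def)
  have "12* sqrt 3/d > 12* sqrt 3/(2*(x-6)* sqrt 3)"
    using d0 d1 s3 by (intro divide_strict_left_mono) auto
  also have "12* sqrt 3/(2*(x-6)* sqrt 3) = 6/(x-6)" using s3 x by (simp add: field_simps)
  finally have gt: "p - 1 > 6/(x-6)" using p pj2 by simp
  have x6: "x - 6 > 0" using x by simp
  have p1: "p - 1 > 0" using gt x6 by (smt (verit) divide_pos_pos)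
  have "6/(p-1) < 6/(6/(x-6))" using gt x6 p1 by (intro divide_strict_left_mono) auto
  also have "\<dots> = x - 6" using x6 by simp
  finally show ?thesis using p1 x_def by simp
qed

theorem lemma3p3:
  fixes n :: nat and p \<epsilon> r :: real
  assumes "n \<ge> 15" and "p > pJL6 n" and "\<epsilon> > 0" and "r > 0"
  shows "- rlap n (u_in n p \<epsilon>) r \<ge> v_in n p \<epsilon> r
       \<and> - rlap n (v_in n p \<epsilon>) r \<ge> w_in n p \<epsilon> r
       \<and> - rlap n (w_in n p \<epsilon>) r \<ge> (u_in n p \<epsilon> r) powr p"
proof -
  have e: "\<epsilon> > 0" and r: "r > 0" using assms by auto
  define m where "m = mexp p"
  define L where "L = Lconst n p"
  define N where "N = real n"
  have pb: "p > 1 \<and> 6/(p-1) < real n - 6" using pJL6_bound assms(1,2) by blast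
  have p1: "p > 1" using pb by simp
  have m0: "m > 0" unfolding m_def mexp_def using p1 by simp
  have mN: "m < N - 6" unfolding m_def mexp_def N_def using pb by simp
  have mp: "m * p = m + 6" unfolding m_def mexp_def using p1 by (simp add: field_simps)
  define Pr where "Pr = m * (m + 2) * (m + 4) * (N - 2 - m) * (N - 4 - m) * (N - 6 - m)"
  have Pr: "Pr > 0" unfolding Pr_def using m0 mN by simp
  have L: "L = Pr powr (1/(p-1))" unfolding L_def Lconst_def Pr_def m_def N_def Let_def ..
  have L0: "L > 0" using L Pr by simp
  have Lp: "L powr p = Pr * L"
  proof -
    have "L powr p = L powr ((p-1) + 1)" by simp
    also have "\<dots> = L powr (p-1) * L powr 1" by (rule powr_add)
    also have "L powr (p-1) = Pr" unfolding L powr_powr using p1 Pr by simp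
    finally show ?thesis using L0 by simp
  qed
  define s where "s = r^2 + \<epsilon>"
  have s0: "s > 0" unfolding s_def using e by (simp add: add_nonneg_pos)
  have U: "u_in n p \<epsilon> = (\<lambda>x. L * (x^2+\<epsilon>) powr (-m/2))"
    unfolding u_in_def L_def m_def by (rule ext) simp
  have V: "v_in n p \<epsilon> = (\<lambda>x. (m * (N - 2 - m) * L) * (x^2+\<epsilon>) powr (-(m+2)/2))"
    unfolding v_in_def L_def m_def N_def by (rule ext) simp
  have W: "w_in n p \<epsilon> = (\<lambda>x. (m * (m + 2) * (N - 2 - m) * (N - 4 - m) * L) * (x^2+\<epsilon>) powr (-(m+4)/2))"
    unfolding w_in_def L_def m_def N_def by (rule ext) simp
  have 1: "- rlap n (u_in n p \<epsilon>) r \<ge> v_in n p \<epsilon> r"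
  proof -
    have "- rlap n (u_in n p \<epsilon>) r \<ge> L*m*(real n - m - 2)*(r^2+\<epsilon>) powr (-(m+2)/2)"
      unfolding U using L0 m0 by (intro rlap_ineq[OF e r]) auto
    moreover have "v_in n p \<epsilon> r = L*m*(real n - m - 2)*(r^2+\<epsilon>) powr (-(m+2)/2)"
      unfolding V N_def by (simp add: algebra_simps)
    ultimately show ?thesis by simp
  qed
  have 2: "- rlap n (v_in n p \<epsilon>) r \<ge> w_in n p \<epsilon> r"
  proof -
    have a: "- rlap n (v_in n p \<epsilon>) r \<ge> (m * (N - 2 - m) * L)*(m+2)*(real n - (m+2) - 2)*(r^2+\<epsilon>) powr (-((m+2)+2)/2)"
      unfolding V using L0 m0 mN by (intro rlap_ineq[OF e r]) auto
    have b: "-((m+2)+2)/2 = -(m+4)/2" by simp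
    have c: "w_in n p \<epsilon> r = (m * (N - 2 - m) * L)*(m+2)*(real n - (m+2) - 2)*(r^2+\<epsilon>) powr (-(m+4)/2)"
      unfolding W N_def by (simp add: algebra_simps)
    show ?thesis using a[unfolded b] unfolding c .
  qed
  have 3: "- rlap n (w_in n p \<epsilon>) r \<ge> (u_in n p \<epsilon> r) powr p"
  proof -
    have a: "- rlap n (w_in n p \<epsilon>) r \<ge> (m * (m + 2) * (N - 2 - m) * (N - 4 - m) * L)*(m+4)*(real n - (m+4) - 2)*(r^2+\<epsilon>) powr (-((m+4)+2)/2)"
      unfolding W using L0 m0 mN by (intro rlap_ineq[OF e r] mult_nonneg_nonneg) auto
    have b: "-((m+4)+2)/2 = (-m/2) * p" using mp by (simp add: field_simps)
    have c: "(u_in n p \<epsilon> r) powr p = Pr * L * (r^2+\<epsilon>) powr ((-m/2) * p)"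
    proof -
      have "(u_in n p \<epsilon> r) powr p = L powr p * ((r^2+\<epsilon>) powr (-m/2)) powr p"
        unfolding U by (simp add: powr_mult)
      then show ?thesis unfolding Lp powr_powr by simp
    qed
    have d: "(m * (m + 2) * (N - 2 - m) * (N - 4 - m) * L)*(m+4)*(real n - (m+4) - 2) = Pr * L"
      unfolding Pr_def N_def by (simp add: algebra_simps)
    show ?thesis using a[unfolded b d] unfolding c .
  qed
  show ?thesis using 1 2 3 by blast
qed
end
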